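(* The variety $\mathsf{KA}$ of Kleene algebras (equivalently, 3-valued Kleene logic, with formulas identified up to logical equivalence) has unitary e-generalization type.
   Context: $\mathsf{KA}$ is the variety of Kleene algebras: bounded distributive lattices $(A,\wedge,\vee,0,1)$ with a unary operation $\neg$ satisfying $\neg\neg x\approx x$, $x\wedge y\approx\neg(\neg x\vee\neg y)$, and $x\wedge\neg x\le y\vee\neg y$; it is the equivalent algebraic semantics of Kleene's 3-valued logic. For a variety $\mathsf V$: a symbolic e-generalization problem is a finite multiset $\{t_1,\dots,t_m\}$ of terms (elements of a free algebra $\mathbf F_{\mathsf V}(X)$, $X$ finite); a solution is a term $s\in\mathbf F_{\mathsf V}(Y)$ ($Y$ the variables of $s$) with substitutions (homomorphisms between free algebras) $\sigma_k$ such that $\sigma_k(s)=t_k$ for all $k$; $s\preceq u$ iff $\sigma(u)=s$ for some substitution $\sigma$. A problem has unitary type if its poset of solutions modulo $\preceq$-equivalence has a minimal complete set (pairwise incomparable elements such that every solution lies above one of them) of cardinality 1. A variety has unitary e-generalization type if every problem has unitary type. *)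

theory Defs
  imports Main
begin

datatype kterm = Var nat | Bot | Top | Meet kterm kterm | Join kterm kterm | Neg kterm

text \<open>Two terms are related iff they
  denote the same element of the free Kleene algebra.\<close>

inductive kaeq :: "kterm \<Rightarrow> kterm \<Rightarrow> bool" where
  refl: "kaeq x x"
| sym: "kaeq x y \<Longrightarrow> kaeq y x"
| trans: "kaeq x y \<Longrightarrow> kaeq y z \<Longrightarrow> kaeq x z"
| cong_meet: "kaeq x x' \<Longrightarrow> kaeq y y' \<Longrightarrow> kaeq (Meet x y) (Meet x' y')"
| cong_join: "kaeq x x' \<Longrightarrow> kaeq y y' \<Longrightarrow> kaeq (Join x y) (Join x' y')"
| cong_neg: "kaeq x x' \<Longrightarrow> kaeq (Neg x) (Neg x')"
| meet_assoc: "kaeq (Meet (Meet x y) z) (Meet x (Meet y z))"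
| join_assoc: "kaeq (Join (Join x y) z) (Join x (Join y z))"
| meet_comm: "kaeq (Meet x y) (Meet y x)"
| join_comm: "kaeq (Join x y) (Join y x)"
| absorb_meet: "kaeq (Meet x (Join x y)) x"
| absorb_join: "kaeq (Join x (Meet x y)) x"
| distrib: "kaeq (Meet x (Join y z)) (Join (Meet x y) (Meet x z))"
| bot: "kaeq (Join x Bot) x"
| top: "kaeq (Meet x Top) x"
| neg_neg: "kaeq (Neg (Neg x)) x"
| de_morgan: "kaeq (Meet x y) (Neg (Join (Neg x) (Neg y)))"
| kleene: "kaeq (Meet (Meet x (Neg x)) (Join y (Neg y))) (Meet x (Neg x))"

primrec subst :: "(nat \<Rightarrow> kterm) \<Rightarrow> kterm \<Rightarrow> kterm" where
  "subst \<sigma> (Var v) = \<sigma> v"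
| "subst \<sigma> Bot = Bot"
| "subst \<sigma> Top = Top"
| "subst \<sigma> (Meet a b) = Meet (subst \<sigma> a) (subst \<sigma> b)"
| "subst \<sigma> (Join a b) = Join (subst \<sigma> a) (subst \<sigma> b)"
| "subst \<sigma> (Neg a) = Neg (subst \<sigma> a)"

text \<open>The problem {t_1,...,t_m} is represented by a list (order and
  multiplicity are irrelevant for the notion of solution).\<close>

definition is_solution :: "kterm list \<Rightarrow> kterm \<Rightarrow> bool" where
  "is_solution ts s \<longleftrightarrow> (\<forall>t\<in>set ts. \<exists>\<sigma>. kaeq (subst \<sigma> s) t)"

definition inst_le :: "kterm \<Rightarrow> kterm \<Rightarrow> bool" where
  "inst_le s u \<longleftrightarrow> (\<exists>\<sigma>. kaeq (subst \<sigma> u) s)"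

definition minimal_complete_set :: "kterm list \<Rightarrow> kterm set \<Rightarrow> bool" where
  "minimal_complete_set ts M \<longleftrightarrow>
     (\<forall>m\<in>M. is_solution ts m) \<and>
     (\<forall>u\<in>M. \<forall>v\<in>M. inst_le u v \<longrightarrow> u = v) \<and>
     (\<forall>s. is_solution ts s \<longrightarrow> (\<exists>m\<in>M. inst_le m s))"

definition unitary_type :: "kterm list \<Rightarrow> bool" where
  "unitary_type ts \<longleftrightarrow> (\<exists>M. minimal_complete_set ts M \<and> card M = 1)"

end

theory Submission
  imports Defs
begin

quotient_type ka = kterm / kaeq
  by (rule equivpI; auto simp: reflp_def symp_def transp_def intro: kaeq.intros)

lift_definition kmeet :: "ka \<Rightarrow> ka \<Rightarrow> ka" is Meet by (rule kaeq.cong_meet)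
lift_definition kjoin :: "ka \<Rightarrow> ka \<Rightarrow> ka" is Join by (rule kaeq.cong_join)
lift_definition kneg :: "ka \<Rightarrow> ka" is Neg by (rule kaeq.cong_neg)
lift_definition kbot :: "ka" is Bot .
lift_definition ktop :: "ka" is Top .

lemma A1: "kmeet (kmeet x y) z = kmeet x (kmeet y z)" by transfer (rule kaeq.meet_assoc)
lemma A2: "kjoin (kjoin x y) z = kjoin x (kjoin y z)" by transfer (rule kaeq.join_assoc)
lemma C1: "kmeet x y = kmeet y x" by transfer (rule kaeq.meet_comm)
lemma C2: "kjoin x y = kjoin y x" by transfer (rule kaeq.join_comm)
lemma Ab1: "kmeet x (kjoin x y) = x" by transfer (rule kaeq.absorb_meet)
lemma Ab2: "kjoin x (kmeet x y) = x" by transfer (rule kaeq.absorb_join)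
lemma D: "kmeet x (kjoin y z) = kjoin (kmeet x y) (kmeet x z)" by transfer (rule kaeq.distrib)
lemma B: "kjoin x kbot = x" by transfer (rule kaeq.bot)
lemma T: "kmeet x ktop = x" by transfer (rule kaeq.top)
lemma NN: "kneg (kneg x) = x" by transfer (rule kaeq.neg_neg)
lemma DM: "kmeet x y = kneg (kjoin (kneg x) (kneg y))" by transfer (rule kaeq.de_morgan)

lemma I1: "kmeet x x = x" using Ab1[of x "kmeet x x"] Ab2[of x x] by simp
lemma I2: "kjoin x x = x" using Ab2[of x "kjoin x x"] Ab1[of x x] by simp

instantiation ka :: "{distrib_lattice, bounded_lattice}"
begin
definition "inf_ka = kmeet"
definition "sup_ka = kjoin"
definition "bot_ka = kbot"
definition "top_ka = ktop"
definition "less_eq_ka x y = (kmeet x y = x)"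
definition "less_ka x y = (kmeet x y = x \<and> kmeet y x \<noteq> y)"
instance
proof
  fix x y z :: ka
  show "(x < y) = (x \<le> y \<and> \<not> y \<le> x)" by (simp add: less_eq_ka_def less_ka_def)
  show "x \<le> x" by (simp add: less_eq_ka_def I1)
  show "x \<le> y \<Longrightarrow> y \<le> z \<Longrightarrow> x \<le> z" unfolding less_eq_ka_def
  proof -
    assume a: "kmeet x y = x" and b: "kmeet y z = y"
    have "kmeet x z = kmeet (kmeet x y) z" using a by simp
    also have "\<dots> = kmeet x (kmeet y z)" by (rule A1)
    also have "\<dots> = x" using a b by simp
    finally show "kmeet x z = x" .
  qed
  show "x \<le> y \<Longrightarrow> y \<le> x \<Longrightarrow> x = y" unfolding less_eq_ka_def using C1[of x y] by simp
  show "inf x y \<le> x" unfolding less_eq_ka_def inf_ka_def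
    by (simp add: A1 C1[of y x] A1[symmetric] I1)
  show "inf x y \<le> y" unfolding less_eq_ka_def inf_ka_def
    by (simp add: A1 I1)
  show "x \<le> y \<Longrightarrow> x \<le> z \<Longrightarrow> x \<le> inf y z" unfolding less_eq_ka_def inf_ka_def
    by (simp add: A1[symmetric])
  show "x \<le> sup x y" unfolding less_eq_ka_def sup_ka_def by (rule Ab1)
  show "y \<le> sup x y" unfolding less_eq_ka_def sup_ka_def by (simp add: C2[of x y] Ab1)
  show "y \<le> x \<Longrightarrow> z \<le> x \<Longrightarrow> sup y z \<le> x" unfolding less_eq_ka_def sup_ka_def
  proof -
    assume a: "kmeet y x = y" and b: "kmeet z x = z"
    have "kmeet (kjoin y z) x = kmeet x (kjoin y z)" by (rule C1)
    also have "\<dots> = kjoin (kmeet x y) (kmeet x z)" by (rule D)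
    also have "\<dots> = kjoin y z" using a b C1[of x y] C1[of x z] by simp
    finally show "kmeet (kjoin y z) x = kjoin y z" .
  qed
  show "bot \<le> x" unfolding less_eq_ka_def bot_ka_def using Ab1[of kbot x] B[of x] C2[of x kbot] by simp
  show "x \<le> top" unfolding less_eq_ka_def top_ka_def by (rule T)
  have "kjoin x (kmeet y z) = kmeet (kjoin x y) (kjoin x z)"
  proof -
    have "kmeet (kjoin x y) (kjoin x z) = kjoin (kmeet (kjoin x y) x) (kmeet (kjoin x y) z)" by (rule D)
    also have "kmeet (kjoin x y) x = x" using Ab1[of x y] C1[of x "kjoin x y"] by simp
    also have "kmeet (kjoin x y) z = kjoin (kmeet x z) (kmeet y z)"
      using D[of z x y] C1[of z "kjoin x y"] C1[of z x] C1[of z y] by simp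
    also have "kjoin x (kjoin (kmeet x z) (kmeet y z)) = kjoin x (kmeet y z)"
      using A2[of x "kmeet x z" "kmeet y z"] Ab2[of x z] by simp
    finally show ?thesis by simp
  qed
  then show "sup x (inf y z) = inf (sup x y) (sup x z)" by (simp add: sup_ka_def inf_ka_def)
qed
end

lemma negsup: "kneg (sup x y) = inf (kneg x) (kneg y)"
  unfolding inf_ka_def sup_ka_def using DM[of "kneg x" "kneg y"] by (simp add: NN)
lemma neginf: "kneg (inf x y) = sup (kneg x) (kneg y)"
  unfolding inf_ka_def sup_ka_def using DM[of x y] by (simp add: NN)
lemma negbot: "kneg bot = top"
  using negsup[of bot "kneg top"] by (simp add: NN)
lemma negtop: "kneg top = bot" using negbot NN by metis

definition Pk :: "ka \<Rightarrow> ka \<Rightarrow> ka \<Rightarrow> ka" where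
  "Pk z a b = sup (sup (inf z a) (inf (kneg z) b)) (inf z (kneg z))"


lemma gen_inf: fixes z n a1 a2 b1 b2 :: "'a::distrib_lattice"
  shows "inf (sup (sup (inf z a1) (inf n a2)) (inf z n)) (sup (sup (inf z b1) (inf n b2)) (inf z n))
   = sup (sup (inf z (inf a1 b1)) (inf n (inf a2 b2))) (inf z n)"
  apply (rule antisym)
   apply (simp only: inf_sup_distrib1 inf_sup_distrib2)
   apply (intro le_supI)
  apply (simp_all add: inf.coboundedI1 inf.coboundedI2 le_supI1 le_supI2 inf_assoc inf_left_commute inf_commute)
  done
lemma gen_neg: fixes z n a b :: "'a::distrib_lattice"
  shows "inf (inf (sup n a) (sup z b)) (sup n z) = sup (sup (inf z a) (inf n b)) (inf z n)"
  apply (rule antisym)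
   apply (simp only: inf_sup_distrib1 inf_sup_distrib2)
   apply (intro le_supI)
  apply (simp_all add: inf.coboundedI1 inf.coboundedI2 le_supI1 le_supI2 inf_assoc inf_left_commute inf_commute)
  done

lemma gen_sup: fixes z n a1 a2 b1 b2 :: "'a::distrib_lattice"
  shows "sup (sup (sup (inf z a1) (inf n a2)) (inf z n)) (sup (sup (inf z b1) (inf n b2)) (inf z n))
   = sup (sup (inf z (sup a1 b1)) (inf n (sup a2 b2))) (inf z n)"
  by (simp add: inf_sup_distrib1 sup_aci)

lemma Pk_inf: "inf (Pk z a1 a2) (Pk z b1 b2) = Pk z (inf a1 b1) (inf a2 b2)"
  unfolding Pk_def by (rule gen_inf)
lemma Pk_sup: "sup (Pk z a1 a2) (Pk z b1 b2) = Pk z (sup a1 b1) (sup a2 b2)"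
  unfolding Pk_def by (rule gen_sup)
lemma Pk_neg: "kneg (Pk z a b) = Pk z (kneg a) (kneg b)"
  unfolding Pk_def by (simp add: negsup neginf NN gen_neg)
lemma Pk_top: "Pk top a b = a" unfolding Pk_def by (simp add: negtop)
lemma Pk_bot: "Pk bot a b = b" unfolding Pk_def by (simp add: negbot)

definition ev :: "kterm \<Rightarrow> ka" where "ev = abs_ka"

lemma ev_simps[simp]: "ev (Meet a b) = inf (ev a) (ev b)" "ev (Join a b) = sup (ev a) (ev b)"
  "ev (Neg a) = kneg (ev a)" "ev Bot = bot" "ev Top = top"
  unfolding ev_def inf_ka_def sup_ka_def bot_ka_def top_ka_def
  by (simp_all add: kmeet.abs_eq kjoin.abs_eq kneg.abs_eq kbot.abs_eq ktop.abs_eq)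

lemma ev_eq: "ev a = ev b \<longleftrightarrow> kaeq a b"
  unfolding ev_def by (simp add: ka.abs_eq_iff)

lemma subst_kaeq: "kaeq a b \<Longrightarrow> kaeq (subst \<sigma> a) (subst \<sigma> b)"
  by (induction rule: kaeq.induct) (auto intro: kaeq.intros)

lemma ev_subst: "ev a = ev b \<Longrightarrow> ev (subst \<sigma> a) = ev (subst \<sigma> b)"
  using subst_kaeq ev_eq by blast

lemma subst_Var: "subst Var t = t" by (induction t) auto

primrec vars :: "kterm \<Rightarrow> nat set" where
  "vars (Var v) = {v}" | "vars Bot = {}" | "vars Top = {}"
| "vars (Meet a b) = vars a \<union> vars b" | "vars (Join a b) = vars a \<union> vars b" | "vars (Neg a) = vars a"

primrec maxvar :: "kterm \<Rightarrow> nat" where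
  "maxvar (Var v) = v" | "maxvar Bot = 0" | "maxvar Top = 0"
| "maxvar (Meet a b) = max (maxvar a) (maxvar b)" | "maxvar (Join a b) = max (maxvar a) (maxvar b)"
| "maxvar (Neg a) = maxvar a"

lemma maxvar_le: "v \<in> vars t \<Longrightarrow> v \<le> maxvar t"
  by (induction t) auto

lemma subst_cong: "(\<And>v. v \<in> vars t \<Longrightarrow> \<sigma> v = \<tau> v) \<Longrightarrow> subst \<sigma> t = subst \<tau> t"
  by (induction t) auto

primrec cl :: "kterm \<Rightarrow> nat" where
  "cl (Var v) = 1" | "cl Bot = 0" | "cl Top = 2"
| "cl (Meet a b) = min (cl a) (cl b)" | "cl (Join a b) = max (cl a) (cl b)" | "cl (Neg a) = 2 - cl a"

lemma cl_le: "cl s \<le> 2" by (induction s) auto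

lemma cl_const: "(cl s = 0 \<longrightarrow> ev s = bot) \<and> (cl s = 2 \<longrightarrow> ev s = top)"
proof (induction s)
  case (Meet a b) then show ?case using cl_le[of a] cl_le[of b] by (auto simp: min_def)
next
  case (Join a b) then show ?case using cl_le[of a] cl_le[of b] by (auto simp: max_def)
next
  case (Neg a) then show ?case using cl_le[of a] by (auto simp: negbot negtop)
qed auto

lemma cl_top: "cl s = 2 \<Longrightarrow> ev (subst \<tau> s) = top"
  using cl_const[of s] ev_subst[of s Top \<tau>] by simp
lemma cl_bot: "cl s = 0 \<Longrightarrow> ev (subst \<tau> s) = bot"
  using cl_const[of s] ev_subst[of s Bot \<tau>] by simp

definition PT :: "kterm \<Rightarrow> kterm \<Rightarrow> kterm \<Rightarrow> kterm" where
  "PT z a b = Join (Join (Meet z a) (Meet (Neg z) b)) (Meet z (Neg z))"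

lemma ev_PT: "ev (PT z a b) = Pk (ev z) (ev a) (ev b)"
  unfolding PT_def Pk_def by simp

lemma subst_PT[simp]: "subst \<sigma> (PT z a b) = PT (subst \<sigma> z) (subst \<sigma> a) (subst \<sigma> b)"
  by (simp add: PT_def)

primrec H :: "nat \<Rightarrow> kterm list \<Rightarrow> kterm" where
  "H N [] = Bot"
| "H N (a # as) = (if as = [] then a else PT (Var (N + length as)) a (H N as))"

primrec Hk :: "nat \<Rightarrow> ka list \<Rightarrow> ka" where
  "Hk N [] = bot"
| "Hk N (a # as) = (if as = [] then a else Pk (ev (Var (N + length as))) a (Hk N as))"

lemma ev_H: "ev (H N as) = Hk N (map ev as)"
  by (induction as) (auto simp: ev_PT)

lemma Hk_inf: "L \<noteq> [] \<Longrightarrow> Hk N (map (\<lambda>x. inf (f x) (g x)) L) = inf (Hk N (map f L)) (Hk N (map g L))"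
  by (induction L) (auto simp: Pk_inf)
lemma Hk_sup: "L \<noteq> [] \<Longrightarrow> Hk N (map (\<lambda>x. sup (f x) (g x)) L) = sup (Hk N (map f L)) (Hk N (map g L))"
  by (induction L) (auto simp: Pk_sup)
lemma Hk_neg: "L \<noteq> [] \<Longrightarrow> Hk N (map (\<lambda>x. kneg (f x)) L) = kneg (Hk N (map f L))"
  by (induction L) (auto simp: Pk_neg)

lemma main:
  assumes "L \<noteq> []"
  shows "cl s = 1 \<Longrightarrow> ev (subst (\<lambda>x. H N (map (\<lambda>\<tau>. \<tau> x) L)) s) = Hk N (map (\<lambda>\<tau>. ev (subst \<tau> s)) L)"
proof (induction s)
  case (Var x)
  then show ?case by (simp add: ev_H comp_def)
next
  case (Meet u v)
  have "cl u = 1 \<and> cl v = 1 \<or> cl u = 2 \<and> cl v = 1 \<or> cl u = 1 \<and> cl v = 2"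
    using Meet.prems cl_le[of u] cl_le[of v] by (auto simp: min_def split: if_splits)
  then show ?case
  proof (elim disjE conjE)
    assume "cl u = 1" "cl v = 1" then show ?thesis using Meet assms by (simp add: Hk_inf)
  next
    assume "cl u = 2" "cl v = 1" then show ?thesis using Meet assms by (simp add: cl_top)
  next
    assume "cl u = 1" "cl v = 2" then show ?thesis using Meet assms by (simp add: cl_top)
  qed
next
  case (Join u v)
  have "cl u = 1 \<and> cl v = 1 \<or> cl u = 0 \<and> cl v = 1 \<or> cl u = 1 \<and> cl v = 0"
    using Join.prems cl_le[of u] cl_le[of v] by (auto simp: max_def split: if_splits)
  then show ?case
  proof (elim disjE conjE)
    assume "cl u = 1" "cl v = 1" then show ?thesis using Join assms by (simp add: Hk_sup)
  next
    assume "cl u = 0" "cl v = 1" then show ?thesis using Join assms by (simp add: cl_bot)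
  next
    assume "cl u = 1" "cl v = 0" then show ?thesis using Join assms by (simp add: cl_bot)
  qed
next
  case (Neg u)
  then have "cl u = 1" using cl_le[of u] by simp
  then show ?case using Neg assms by (simp add: Hk_neg)
qed auto

lemma vars_H: "(\<forall>t\<in>set as. \<forall>v\<in>vars t. v < N) \<Longrightarrow> v \<in> vars (H N as) \<Longrightarrow> v < N + length as"
proof (induction as arbitrary: v)
  case (Cons a as)
  then show ?case by (fastforce simp: PT_def split: if_splits)
qed simp

lemma sel:
  assumes "\<forall>t\<in>set ts. \<forall>v\<in>vars t. v < N"
  shows "t \<in> set ts \<Longrightarrow> \<exists>\<tau>. (\<forall>v<N. \<tau> v = Var v) \<and> ev (subst \<tau> (H N ts)) = ev t"
  using assms
proof (induction ts)
  case Nil then show ?case by simp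
next
  case (Cons a as)
  have fixa: "subst \<tau> a = a" if "\<forall>v<N. \<tau> v = Var v" for \<tau>
  proof -
    have "subst \<tau> a = subst Var a" by (rule subst_cong) (use that Cons.prems in auto)
    then show ?thesis by (simp add: subst_Var)
  qed
  show ?case
  proof (cases "as = []")
    case True
    then have "t = a" using Cons.prems by simp
    then show ?thesis using True by (intro exI[of _ Var]) (simp add: subst_Var)
  next
    case False
    define z where "z = N + length as"
    have Heq: "H N (a # as) = PT (Var z) a (H N as)" using False by (simp add: z_def)
    show ?thesis
    proof (cases "t = a")
      case True
      define \<tau> where "\<tau> = Var(z := Top)"
      have fx: "\<forall>v<N. \<tau> v = Var v" by (simp add: \<tau>_def z_def)
      have hz: "\<tau> z = Top" by (simp add: \<tau>_def)
      have ha: "subst \<tau> a = a" using fixa[OF fx] .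
      have "ev (subst \<tau> (H N (a # as))) = ev t"
        using True unfolding Heq by (simp add: ev_PT hz ha Pk_top)
      then show ?thesis using fx by blast
    next
      case nt: False
      then have "t \<in> set as" using Cons.prems by simp
      then obtain \<tau>' where t1: "\<forall>v<N. \<tau>' v = Var v" and t2: "ev (subst \<tau>' (H N as)) = ev t"
        using Cons by auto
      define \<tau> where "\<tau> = \<tau>'(z := Bot)"
      have fx: "\<forall>v<N. \<tau> v = Var v" using t1 by (simp add: \<tau>_def z_def)
      have "subst \<tau> (H N as) = subst \<tau>' (H N as)"
      proof (rule subst_cong)
        fix v assume "v \<in> vars (H N as)"
        then have "v < z" using vars_H Cons.prems z_def by auto
        then show "\<tau> v = \<tau>' v" by (simp add: \<tau>_def)
      qed
      then have "ev (subst \<tau> (H N (a # as))) = ev t"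
        using t2 unfolding Heq by (simp add: ev_PT Pk_bot \<tau>_def)
      then show ?thesis using fx by blast
    qed
  qed
qed

theorem theorem5p9:
  shows "\<forall>ts. ts \<noteq> [] \<longrightarrow> unitary_type ts"
proof (intro allI impI)
  fix ts :: "kterm list" assume ne: "ts \<noteq> []"
  show "unitary_type ts"
  proof (cases "\<forall>t\<in>set ts. kaeq t (hd ts)")
    case True
    have "minimal_complete_set ts {hd ts}"
      unfolding minimal_complete_set_def is_solution_def inst_le_def
    proof (intro conjI ballI allI impI)
      fix m t assume "m \<in> {hd ts}" "t \<in> set ts"
      then show "\<exists>\<sigma>. kaeq (subst \<sigma> m) t"
        using True by (intro exI[of _ Var]) (auto simp: subst_Var intro: kaeq.sym)
    next
      fix s assume "\<forall>t\<in>set ts. \<exists>\<sigma>. kaeq (subst \<sigma> s) t"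
      then show "\<exists>m\<in>{hd ts}. \<exists>\<sigma>. kaeq (subst \<sigma> s) m" using ne by simp
    qed auto
    then show ?thesis unfolding unitary_type_def by (intro exI[of _ "{hd ts}"]) simp
  next
    case False
    then obtain t0 where t0: "t0 \<in> set ts" "\<not> kaeq t0 (hd ts)" by blast
    have hd: "hd ts \<in> set ts" using ne by simp
    define N where "N = Suc (sum_list (map maxvar ts))"
    have Nb: "\<forall>t\<in>set ts. \<forall>v\<in>vars t. v < N"
    proof (intro ballI)
      fix t v assume "t \<in> set ts" "v \<in> vars t"
      then have "v \<le> maxvar t" "maxvar t \<le> sum_list (map maxvar ts)"
        by (auto simp: maxvar_le member_le_sum_list)
      then show "v < N" by (simp add: N_def)
    qed
    define m where "m = H N ts"
    have sol: "is_solution ts m"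
      unfolding is_solution_def m_def
    proof
      fix t assume "t \<in> set ts"
      then obtain \<tau> where "ev (subst \<tau> (H N ts)) = ev t" using sel[OF Nb] by blast
      then show "\<exists>\<sigma>. kaeq (subst \<sigma> (H N ts)) t" using ev_eq by blast
    qed
    have compl: "inst_le m s" if "is_solution ts s" for s
    proof -
      from that have "\<forall>t\<in>set ts. \<exists>\<sigma>. ev (subst \<sigma> s) = ev t"
        unfolding is_solution_def using ev_eq by blast
      then obtain S where S: "\<And>t. t \<in> set ts \<Longrightarrow> ev (subst (S t) s) = ev t" by metis
      have "cl s \<noteq> 0"
      proof
        assume "cl s = 0"
        then have "ev t0 = ev (hd ts)" using S[OF t0(1)] S[OF hd] cl_bot by metis
        then show False using t0(2) ev_eq by blast
      qed
      moreover have "cl s \<noteq> 2"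
      proof
        assume "cl s = 2"
        then have "ev t0 = ev (hd ts)" using S[OF t0(1)] S[OF hd] cl_top by metis
        then show False using t0(2) ev_eq by blast
      qed
      ultimately have c1: "cl s = 1" using cl_le[of s] by linarith
      have "ev (subst (\<lambda>x. H N (map (\<lambda>\<tau>. \<tau> x) (map S ts))) s)
            = Hk N (map (\<lambda>\<tau>. ev (subst \<tau> s)) (map S ts))"
        using main[of "map S ts" s N] c1 ne by simp
      also have "\<dots> = Hk N (map ev ts)"
        by (simp add: comp_def S cong: map_cong)
      also have "\<dots> = ev m" by (simp add: m_def ev_H)
      finally show ?thesis unfolding inst_le_def using ev_eq by blast
    qed
    have "minimal_complete_set ts {m}"
      unfolding minimal_complete_set_def using sol compl by auto
    then show ?thesis unfolding unitary_type_def by (intro exI[of _ "{m}"]) simp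
  qed
qed

end
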